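(* Let $d \ge 0$ be an integer, let $V(K_n) = X \cup Y$ be a partition, and let $c : E(K_n) \to \{R,G,B\}$ be an almost Gallai colouring of $K_n$ such that $|N_G(y) \cap X| \le d$ for all $y \in Y$. Then \[ \tau^{G}_{\mathrm{rb}}(X,Y) \le \frac{e}{2}(d+1)\,|X| \log |X|. \]
   Context: A colouring of $E(K_n)$ is almost Gallai if no two rainbow triangles share an edge, where a triangle is rainbow if its three edges have pairwise distinct colours. $N_G(y)$ is the set of vertices joined to $y$ by a green edge. For disjoint $X, Y \subseteq V(K_n)$ and a colour $q$, $\tau^{q}_{\mathrm{rb}}(X,Y)$ is the number of rainbow triangles $y x_1 x_2$ with $y \in Y$, $x_1, x_2 \in X$ and $x_1x_2$ coloured $q$. Logarithms are in base 2. *)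

theory Defs
  imports Complex_Main
begin

datatype colour = R | G | B

text \<open>A colouring of the edges of the complete graph on vertex set V is a function
  c with c u v = c v u for distinct u, v in V (values on the diagonal are irrelevant).\<close>
definition edge_colouring :: "'a set \<Rightarrow> ('a \<Rightarrow> 'a \<Rightarrow> colour) \<Rightarrow> bool" where
  "edge_colouring V c \<longleftrightarrow> (\<forall>u\<in>V. \<forall>v\<in>V. u \<noteq> v \<longrightarrow> c u v = c v u)"

definition rainbow :: "('a \<Rightarrow> 'a \<Rightarrow> colour) \<Rightarrow> 'a \<Rightarrow> 'a \<Rightarrow> 'a \<Rightarrow> bool" where
  "rainbow c a b d \<longleftrightarrow> a \<noteq> b \<and> a \<noteq> d \<and> b \<noteq> d \<and>
     c a b \<noteq> c a d \<and> c a b \<noteq> c b d \<and> c a d \<noteq> c b d"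

text \<open>No two (distinct) rainbow triangles share an edge.\<close>
definition almost_gallai :: "'a set \<Rightarrow> ('a \<Rightarrow> 'a \<Rightarrow> colour) \<Rightarrow> bool" where
  "almost_gallai V c \<longleftrightarrow> (\<forall>a\<in>V. \<forall>b\<in>V. \<forall>u\<in>V. \<forall>v\<in>V.
      rainbow c a b u \<and> rainbow c a b v \<longrightarrow> u = v)"

definition green_nbhd :: "'a set \<Rightarrow> ('a \<Rightarrow> 'a \<Rightarrow> colour) \<Rightarrow> 'a \<Rightarrow> 'a set" where
  "green_nbhd V c y = {x \<in> V. x \<noteq> y \<and> c y x = G}"

text \<open>Number of rainbow triangles y x1 x2 with y in Y, x1, x2 in X and x1x2 coloured q;
  a triangle is identified by its apex y and the unordered pair {x1,x2}.\<close>
definition tau_rb :: "colour \<Rightarrow> ('a \<Rightarrow> 'a \<Rightarrow> colour) \<Rightarrow> 'a set \<Rightarrow> 'a set \<Rightarrow> nat" where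
  "tau_rb q c X Y = card {(y, {x1, x2}) | y x1 x2. y \<in> Y \<and> x1 \<in> X \<and> x2 \<in> X \<and>
       c x1 x2 = q \<and> rainbow c y x1 x2}"

end

theory Submission
  imports Defs "HOL-Analysis.Convex"
begin

lemma prod_if0: "finite T \<Longrightarrow> (\<Prod>x\<in>T. if x\<in>C then 0 else (a::real)) = (if T\<inter>C={} then a^card T else 0)"
proof (cases "T \<inter> C = {}")
  case True
  assume "finite T"
  have "(\<Prod>x\<in>T. if x\<in>C then 0 else (a::real)) = (\<Prod>x\<in>T. a)"
    by (rule prod.cong) (use True in auto)
  then show ?thesis using True by simp
next
  case False
  assume "finite T"
  then show ?thesis using False by (auto intro!: prod_zero)
qed

lemma prod_if1: "finite X \<Longrightarrow> A \<subseteq> X \<Longrightarrow> (\<Prod>x\<in>X. if x\<in>A then (a::real) else 1) = a ^ card A"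
  by (simp add: prod.If_cases Int_absorb1 Int_def[symmetric])

lemma weight_sum:
  fixes p :: real and X A C :: "'a set"
  assumes fin: "finite X" and AX: "A \<subseteq> X" and CX: "C \<subseteq> X" and AC: "A \<inter> C = {}"
  shows "(\<Sum>S\<in>Pow X. if A \<subseteq> S \<and> S \<inter> C = {} then p ^ card S * (1-p) ^ card (X - S) else 0)
       = p ^ card A * (1-p) ^ card C"
proof -
  define f1 where "f1 = (\<lambda>x. if x\<in>C then 0 else p)"
  define f2 where "f2 = (\<lambda>x. if x\<in>A then 0 else 1-p)"
  have "(\<Prod>x\<in>X. f1 x + f2 x) = (\<Sum>S\<in>Pow X. (\<Prod>x\<in>S. f1 x) * (\<Prod>x\<in>X-S. f2 x))"
    by (rule prod_add[OF fin])
  also have "\<dots> = (\<Sum>S\<in>Pow X. if A \<subseteq> S \<and> S \<inter> C = {} then p ^ card S * (1-p) ^ card (X - S) else 0)"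
  proof (rule sum.cong[OF refl])
    fix S assume S: "S \<in> Pow X"
    then have fS: "finite S" "finite (X - S)" using fin finite_subset by auto
    have "(X - S) \<inter> A = {} \<longleftrightarrow> A \<subseteq> S" using AX by blast
    then show "(\<Prod>x\<in>S. f1 x) * (\<Prod>x\<in>X-S. f2 x) = (if A \<subseteq> S \<and> S \<inter> C = {} then p ^ card S * (1-p) ^ card (X - S) else 0)"
      unfolding f1_def f2_def using prod_if0[OF fS(1), of C p] prod_if0[OF fS(2), of A "1-p"] by auto
  qed
  finally have 1: "(\<Prod>x\<in>X. f1 x + f2 x) = (\<Sum>S\<in>Pow X. if A \<subseteq> S \<and> S \<inter> C = {} then p ^ card S * (1-p) ^ card (X - S) else 0)" .
  have "(\<Prod>x\<in>X. f1 x + f2 x) = (\<Prod>x\<in>X. (if x\<in>A then p else 1) * (if x\<in>C then 1-p else 1))"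
    by (rule prod.cong[OF refl]) (use AC in \<open>auto simp: f1_def f2_def\<close>)
  also have "\<dots> = p ^ card A * (1-p) ^ card C"
    by (simp add: prod.distrib prod_if1[OF fin AX] prod_if1[OF fin CX])
  finally show ?thesis using 1 by simp
qed
lemma two_powr_le: fixes x::real assumes "0 \<le> x" "x \<le> 1" shows "2 powr x \<le> 1 + x"
proof -
  have "exp ((1-x) * 0 + x * ln 2) \<le> (1-x) * exp 0 + x * exp (ln 2)"
    using convex_onD[OF exp_convex, of x 0 "ln 2"] assms by simp
  then show ?thesis by (simp add: powr_def mult.commute)
qed

lemma log_one_plus: fixes x::real assumes "0 \<le> x" "x \<le> 1" shows "x \<le> log 2 (1 + x)"
proof -
  have "2 powr x \<le> 1 + x" by (rule two_powr_le[OF assms])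
  then have "log 2 (2 powr x) \<le> log 2 (1 + x)"
    using assms by (subst log_le_cancel_iff) auto
  then show ?thesis by simp
qed

lemma key_ineq:
  fixes a b :: nat assumes "1 \<le> a" "a \<le> b"
  shows "real a / 2 * log 2 a + real b / 2 * log 2 b + real a \<le> real (a+b) / 2 * log 2 (a+b)"
proof -
  have pa: "real a > 0" "real b > 0" using assms by auto
  have "log 2 2 \<le> log 2 ((real a + real b) / real a)"
    using pa assms by (subst log_le_cancel_iff) (auto simp: field_simps)
  then have 1: "1 \<le> log 2 (real a + real b) - log 2 (real a)"
    using pa by (simp add: log_divide)
  have "real a / real b \<le> log 2 (1 + real a / real b)"
    using pa assms by (intro log_one_plus) auto
  also have "1 + real a / real b = (real a + real b) / real b" using pa by (simp add: field_simps)
  finally have 2: "real a / real b \<le> log 2 (real a + real b) - log 2 (real b)"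
    using pa by (simp add: log_divide)
  have "real a \<le> real a * (log 2 (real a + real b) - log 2 (real a))"
    using 1 pa by simp
  moreover have "real a \<le> real b * (log 2 (real a + real b) - log 2 (real b))"
    using 2 pa by (simp add: field_simps)
  ultimately show ?thesis by (simp add: field_simps)
qed

lemma key_ineq_min:
  fixes a b :: nat assumes "1 \<le> a" "1 \<le> b"
  shows "real a / 2 * log 2 a + real b / 2 * log 2 b + real (min a b) \<le> real (a+b) / 2 * log 2 (a+b)"
proof (cases "a \<le> b")
  case True then show ?thesis using key_ineq[OF assms(1) True] by simp
next
  case False then show ?thesis using key_ineq[OF assms(2), of a] by (simp add: add.commute)
qed

lemma nlogn_nonneg: "0 \<le> real (n::nat) / 2 * log 2 (real n)"
  by (cases "n = 0") auto

lemma matching_cuts: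
  fixes S :: "'a set" and I :: "'i set" and M :: "'i \<Rightarrow> 'a set set" and side :: "'i \<Rightarrow> 'a \<Rightarrow> bool"
  assumes "finite S" "finite I"
  and "\<And>i e. i\<in>I \<Longrightarrow> e\<in>M i \<Longrightarrow> \<exists>u v. e = {u,v} \<and> u\<in>S \<and> v\<in>S \<and> side i u \<and> \<not> side i v"
  and "\<And>i u v w. i\<in>I \<Longrightarrow> {u,v}\<in>M i \<Longrightarrow> {u,w}\<in>M i \<Longrightarrow> v = w"
  and "\<And>i j e. i\<in>I \<Longrightarrow> j\<in>I \<Longrightarrow> i\<noteq>j \<Longrightarrow> e \<in> M i \<Longrightarrow> e \<in> M j \<Longrightarrow> False"
  and "\<And>i j u v. i\<in>I \<Longrightarrow> j\<in>I \<Longrightarrow> {u,v}\<in>M j \<Longrightarrow> side i u \<Longrightarrow> \<not> side i v \<Longrightarrow> {u,v}\<in>M i"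
  shows "real (\<Sum>i\<in>I. card (M i)) \<le> real (card S)/2 * log 2 (card S)"
  using assms
proof (induction "card S" arbitrary: S M rule: less_induct)
  case less
  note h1 = less.prems(3) and h2 = less.prems(4) and h3 = less.prems(5) and h4 = less.prems(6)
  show ?case
  proof (cases "\<forall>i\<in>I. M i = {}")
    case True
    then show ?thesis using nlogn_nonneg[of "card S"] by simp
  next
    case False
    then obtain i0 e0 where i0: "i0 \<in> I" and e0: "e0 \<in> M i0" by blast
    then obtain u0 v0 where uv0: "e0 = {u0,v0}" "u0\<in>S" "v0\<in>S" "side i0 u0" "\<not> side i0 v0"
      using h1 by blast
    define R where "R = {x\<in>S. side i0 x}"
    define Bs where "Bs = S - R"
    have finR: "finite R" and finB: "finite Bs" using less.prems(1) by (auto simp: R_def Bs_def)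
    have RS: "R \<subset> S" using uv0 by (auto simp: R_def)
    have BS: "Bs \<subset> S" using uv0 by (auto simp: R_def Bs_def)
    have cR: "card R < card S" by (rule psubset_card_mono[OF less.prems(1) RS])
    have cB: "card Bs < card S" by (rule psubset_card_mono[OF less.prems(1) BS])
    have cRB: "card R + card Bs = card S"
    proof -
      have "R \<subseteq> S" using RS by blast
      then have "card Bs = card S - card R" unfolding Bs_def using finR by (simp add: card_Diff_subset)
      moreover have "card R \<le> card S" using cR by simp
      ultimately show ?thesis by simp
    qed
    define MR where "MR = (\<lambda>i. {e\<in>M i. e \<subseteq> R})"
    define MB where "MB = (\<lambda>i. {e\<in>M i. e \<subseteq> Bs})"
    have IHR: "real (\<Sum>i\<in>I. card (MR i)) \<le> real (card R)/2 * log 2 (card R)"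
    proof (rule less.hyps[OF cR finR less.prems(2)])
      fix i e assume i: "i \<in> I" and e: "e \<in> MR i"
      have "e \<in> M i" using e by (simp add: MR_def)
      then obtain u v where "e = {u,v}" "side i u" "\<not> side i v" using h1[OF i] by blast
      moreover have "u \<in> R" "v \<in> R" using e calculation(1) by (auto simp: MR_def)
      ultimately show "\<exists>u v. e = {u,v} \<and> u\<in>R \<and> v\<in>R \<and> side i u \<and> \<not> side i v" by blast
    next
      fix i u v w assume "i \<in> I" "{u,v}\<in>MR i" "{u,w}\<in>MR i" then show "v = w"
        using h2 unfolding MR_def by blast
    next
      fix i j e assume "i\<in>I" "j\<in>I" "i\<noteq>j" "e \<in> MR i" "e \<in> MR j" then show False
        using h3 unfolding MR_def by blast
    next
      fix i j u v assume "i\<in>I" "j\<in>I" "{u,v}\<in>MR j" "side i u" "\<not> side i v" then show "{u,v}\<in>MR i"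
        using h4 unfolding MR_def by blast
    qed
    have IHB: "real (\<Sum>i\<in>I. card (MB i)) \<le> real (card Bs)/2 * log 2 (card Bs)"
    proof (rule less.hyps[OF cB finB less.prems(2)])
      fix i e assume i: "i \<in> I" and e: "e \<in> MB i"
      have "e \<in> M i" using e by (simp add: MB_def)
      then obtain u v where "e = {u,v}" "side i u" "\<not> side i v" using h1[OF i] by blast
      moreover have "u \<in> Bs" "v \<in> Bs" using e calculation(1) by (auto simp: MB_def)
      ultimately show "\<exists>u v. e = {u,v} \<and> u\<in>Bs \<and> v\<in>Bs \<and> side i u \<and> \<not> side i v" by blast
    next
      fix i u v w assume "i \<in> I" "{u,v}\<in>MB i" "{u,w}\<in>MB i" then show "v = w"
        using h2 unfolding MB_def by blast
    next
      fix i j e assume "i\<in>I" "j\<in>I" "i\<noteq>j" "e \<in> MB i" "e \<in> MB j" then show False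
        using h3 unfolding MB_def by blast
    next
      fix i j u v assume "i\<in>I" "j\<in>I" "{u,v}\<in>MB j" "side i u" "\<not> side i v" then show "{u,v}\<in>MB i"
        using h4 unfolding MB_def by blast
    qed
    have finM: "finite (M i)" if i: "i \<in> I" for i
    proof -
      have "M i \<subseteq> Pow S"
      proof
        fix e assume "e \<in> M i" then obtain u v where "e = {u,v}" "u\<in>S" "v\<in>S" using h1[OF i] by blast
        then show "e \<in> Pow S" by simp
      qed
      then show ?thesis using less.prems(1) finite_subset by blast
    qed
    have split: "card (M i) = card (MR i) + card (MB i) + (if i = i0 then card (M i0) else 0)"
      if i: "i \<in> I" for i
    proof (cases "i = i0")
      case True
      have "MR i0 = {}"
      proof -
        have "\<not> e \<subseteq> R" if "e \<in> M i0" for e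
          using h1[OF i0 that] unfolding R_def by auto
        then show ?thesis unfolding MR_def by auto
      qed
      moreover have "MB i0 = {}"
      proof -
        have "\<not> e \<subseteq> Bs" if "e \<in> M i0" for e
          using h1[OF i0 that] unfolding R_def Bs_def by auto
        then show ?thesis unfolding MB_def by auto
      qed
      ultimately show ?thesis using True by simp
    next
      case False
      have "M i = MR i \<union> MB i"
      proof
        show "M i \<subseteq> MR i \<union> MB i"
        proof
          fix e assume e: "e \<in> M i"
          then obtain u v where uv: "e = {u,v}" "u\<in>S" "v\<in>S" using h1 i by blast
          have "\<not> (side i0 u \<and> \<not> side i0 v)"
          proof
            assume "side i0 u \<and> \<not> side i0 v"
            then have "e \<in> M i0" using h4[OF i0 i] e uv by blast
            then show False using h3[OF i i0 False e] by blast
          qed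
          moreover have "\<not> (side i0 v \<and> \<not> side i0 u)"
          proof
            assume "side i0 v \<and> \<not> side i0 u"
            moreover have "{v,u} \<in> M i" using e uv by (simp add: insert_commute)
            ultimately have "{v,u} \<in> M i0" using h4[OF i0 i] by blast
            then have "e \<in> M i0" using uv by (simp add: insert_commute)
            then show False using h3[OF i i0 False e] by blast
          qed
          ultimately show "e \<in> MR i \<union> MB i" using e uv unfolding MR_def MB_def R_def Bs_def by auto
        qed
      qed (auto simp: MR_def MB_def)
      moreover have "MR i \<inter> MB i = {}"
      proof -
        have "\<not> (e \<subseteq> R \<and> e \<subseteq> Bs)" if "e \<in> M i" for e
          using h1[OF i that] unfolding Bs_def by auto
        then show ?thesis unfolding MR_def MB_def by auto
      qed
      moreover have "finite (MR i)" "finite (MB i)" using finM[OF i] by (auto simp: MR_def MB_def)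
      ultimately show ?thesis using False by (simp add: card_Un_disjoint)
    qed
    have sumsplit: "(\<Sum>i\<in>I. card (M i)) = (\<Sum>i\<in>I. card (MR i)) + (\<Sum>i\<in>I. card (MB i)) + card (M i0)"
    proof -
      have "(\<Sum>i\<in>I. card (M i)) = (\<Sum>i\<in>I. card (MR i) + card (MB i) + (if i = i0 then card (M i0) else 0))"
        by (rule sum.cong[OF refl split])
      also have "\<dots> = (\<Sum>i\<in>I. card (MR i)) + (\<Sum>i\<in>I. card (MB i)) + card (M i0)"
        using less.prems(2) i0 by (simp add: sum.distrib)
      finally show ?thesis .
    qed
    have edge: "\<exists>u v. e = {u,v} \<and> u\<in>R \<and> v\<in>Bs" if e: "e \<in> M i0" for e
    proof -
      obtain u v where "e = {u,v}" "u\<in>S" "v\<in>S" "side i0 u" "\<not> side i0 v" using h1[OF i0 e] by blast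
      then show ?thesis unfolding R_def Bs_def by auto
    qed
    have le1: "card (M i0) \<le> card R"
    proof -
      define f where "f = (\<lambda>e. SOME u. u \<in> e \<and> u \<in> R)"
      have fe: "f e \<in> e \<and> f e \<in> R" if "e \<in> M i0" for e
      proof -
        have "\<exists>u. u \<in> e \<and> u \<in> R" using edge[OF that] by blast
        then show ?thesis unfolding f_def by (rule someI_ex)
      qed
      have "inj_on f (M i0)"
      proof (rule inj_onI)
        fix e1 e2 assume e1: "e1 \<in> M i0" and e2: "e2 \<in> M i0" and eq: "f e1 = f e2"
        obtain u1 v1 where 1: "e1 = {u1,v1}" "u1\<in>R" "v1\<in>Bs" using edge[OF e1] by blast
        obtain u2 v2 where 2: "e2 = {u2,v2}" "u2\<in>R" "v2\<in>Bs" using edge[OF e2] by blast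
        have "f e1 = u1" using fe[OF e1] 1 by (auto simp: Bs_def)
        moreover have "f e2 = u2" using fe[OF e2] 2 by (auto simp: Bs_def)
        ultimately have u: "u1 = u2" using eq by simp
        have "{u1,v1} \<in> M i0" "{u1,v2} \<in> M i0" using e1 e2 1 2 u by auto
        then have "v1 = v2" by (rule h2[OF i0])
        then show "e1 = e2" using 1 2 u by simp
      qed
      moreover have "f ` M i0 \<subseteq> R" using fe by blast
      ultimately show ?thesis using card_inj_on_le finR by blast
    qed
    have le2: "card (M i0) \<le> card Bs"
    proof -
      define f where "f = (\<lambda>e. SOME u. u \<in> e \<and> u \<in> Bs)"
      have fe: "f e \<in> e \<and> f e \<in> Bs" if "e \<in> M i0" for e
      proof -
        have "\<exists>u. u \<in> e \<and> u \<in> Bs" using edge[OF that] by blast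
        then show ?thesis unfolding f_def by (rule someI_ex)
      qed
      have "inj_on f (M i0)"
      proof (rule inj_onI)
        fix e1 e2 assume e1: "e1 \<in> M i0" and e2: "e2 \<in> M i0" and eq: "f e1 = f e2"
        obtain u1 v1 where 1: "e1 = {u1,v1}" "u1\<in>R" "v1\<in>Bs" using edge[OF e1] by blast
        obtain u2 v2 where 2: "e2 = {u2,v2}" "u2\<in>R" "v2\<in>Bs" using edge[OF e2] by blast
        have "f e1 = v1" using fe[OF e1] 1 by (auto simp: Bs_def)
        moreover have "f e2 = v2" using fe[OF e2] 2 by (auto simp: Bs_def)
        ultimately have v: "v1 = v2" using eq by simp
        have "{v1,u1} \<in> M i0" "{v1,u2} \<in> M i0" using e1 e2 1 2 v by (auto simp: insert_commute)
        then have "u1 = u2" by (rule h2[OF i0])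
        then show "e1 = e2" using 1 2 v by simp
      qed
      moreover have "f ` M i0 \<subseteq> Bs" using fe by blast
      ultimately show ?thesis using card_inj_on_le finB by blast
    qed
    have "card R \<ge> 1" "card Bs \<ge> 1" using uv0 finR finB
      by (auto simp: R_def Bs_def card_gt_0_iff Suc_le_eq)
    then have K: "real (card R) / 2 * log 2 (card R) + real (card Bs) / 2 * log 2 (card Bs) + real (min (card R) (card Bs))
        \<le> real (card S) / 2 * log 2 (card S)"
      using key_ineq_min[of "card R" "card Bs"] cRB by simp
    have m: "real (card (M i0)) \<le> real (min (card R) (card Bs))" using le1 le2 by simp
    have eq: "real (\<Sum>i\<in>I. card (M i)) = real (\<Sum>i\<in>I. card (MR i)) + real (\<Sum>i\<in>I. card (MB i)) + real (card (M i0))"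
      using sumsplit by simp
    show ?thesis using eq m IHR IHB K by linarith
  qed
qed

theorem lemma5p2:
  fixes V X Y :: "'a set" and c :: "'a \<Rightarrow> 'a \<Rightarrow> colour" and d :: nat
  assumes "finite V"
    and "X \<union> Y = V" and "X \<inter> Y = {}"
    and "edge_colouring V c"
    and "almost_gallai V c"
    and "\<forall>y\<in>Y. card (green_nbhd V c y \<inter> X) \<le> d"
  shows "real (tau_rb G c X Y) \<le> exp 1 / 2 * (real d + 1) * real (card X) * log 2 (real (card X))"
proof -
  have XV: "X \<subseteq> V" and YV: "Y \<subseteq> V" using assms(2) by auto
  have finX: "finite X" and finY: "finite Y" using XV YV assms(1) finite_subset by auto
  have symc: "c u v = c v u" if "u \<in> V" "v \<in> V" for u v
    using assms(4) that unfolding edge_colouring_def by (cases "u = v") auto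
  have rb_swap: "rainbow c a b' b" if "a\<in>V" "b\<in>V" "b'\<in>V" "rainbow c a b b'" for a b b'
    using that symc[of b b'] unfolding rainbow_def by auto
  have rb_rot: "rainbow c b b' a" if "a\<in>V" "b\<in>V" "b'\<in>V" "rainbow c a b b'" for a b b'
    using that symc[of a b] symc[of a b'] unfolding rainbow_def by auto
  have AG: "v = w" if "a\<in>V" "b\<in>V" "v\<in>V" "w\<in>V" "rainbow c a b v" "rainbow c a b w" for a b v w
    using assms(5) that unfolding almost_gallai_def by blast
  define M where "M = (\<lambda>y. {{x1,x2} | x1 x2. x1\<in>X \<and> x2\<in>X \<and> c x1 x2 = G \<and> rainbow c y x1 x2})"
  define Gy where "Gy = (\<lambda>y. green_nbhd V c y \<inter> X)"
  define n where "n = card X"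
  have Mmem: "u \<in> X \<and> v \<in> X \<and> c u v = G \<and> rainbow c y u v" if y: "y \<in> Y" and uv: "{u,v} \<in> M y" for y u v
  proof -
    obtain x1 x2 where x: "{u,v} = {x1,x2}" "x1\<in>X" "x2\<in>X" "c x1 x2 = G" "rainbow c y x1 x2"
      using uv unfolding M_def by blast
    show ?thesis
    proof (cases "u = x1 \<and> v = x2")
      case True then show ?thesis using x by simp
    next
      case False
      then have "u = x2" "v = x1" using x(1) by (auto simp: doubleton_eq_iff)
      moreover have V3: "x1\<in>V" "x2\<in>V" "y\<in>V" using x XV YV y by auto
      ultimately show ?thesis using x symc[OF V3(1,2)] rb_swap[OF V3(3,1,2)] by simp
    qed
  qed
  have Mform: "\<exists>u v. e = {u,v}" if "e \<in> M y" for e y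
    using that unfolding M_def by blast
  have Mcol: "c y u \<noteq> G \<and> c y v \<noteq> G \<and> c y u \<noteq> c y v \<and> u \<noteq> v \<and> y \<noteq> u \<and> y \<noteq> v"
    if y: "y \<in> Y" and uv: "{u,v} \<in> M y" for y u v
    using Mmem[OF y uv] unfolding rainbow_def by auto
  have finM: "finite (M y)" for y
  proof -
    have "M y \<subseteq> Pow X" unfolding M_def by auto
    then show ?thesis using finX finite_subset by blast
  qed
  have Gyd: "card (Gy y) \<le> d" if "y \<in> Y" for y using assms(6) that unfolding Gy_def by blast
  have GyX: "Gy y \<subseteq> X" for y unfolding Gy_def by blast
  have eGy: "e \<inter> Gy y = {}" "e \<subseteq> X" "card e = 2" if y: "y \<in> Y" and e: "e \<in> M y" for y e
  proof -
    obtain u v where uv: "e = {u,v}" using Mform[OF e] by blast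
    have m: "{u,v} \<in> M y" using e uv by simp
    show "e \<inter> Gy y = {}" using Mcol[OF y m] uv unfolding Gy_def green_nbhd_def by auto
    show "e \<subseteq> X" using Mmem[OF y m] uv by auto
    show "card e = 2" using Mcol[OF y m] uv by auto
  qed
  have tau_eq: "tau_rb G c X Y = (\<Sum>y\<in>Y. card (M y))"
  proof -
    have "{(y, {x1, x2}) | y x1 x2. y \<in> Y \<and> x1 \<in> X \<and> x2 \<in> X \<and> c x1 x2 = G \<and> rainbow c y x1 x2} = Sigma Y M"
      unfolding M_def by blast
    then show ?thesis unfolding tau_rb_def using card_SigmaI[OF finY, of M] finM by simp
  qed
  have perS: "real (\<Sum>y\<in>{y\<in>Y. Gy y \<inter> S = {}}. card {e\<in>M y. e \<subseteq> S}) \<le> real (card S)/2 * log 2 (card S)"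
    if S: "S \<subseteq> X" for S
  proof (rule matching_cuts[where side = "\<lambda>y x. c y x = R"])
    show "finite S" using S finX finite_subset by blast
    show "finite {y\<in>Y. Gy y \<inter> S = {}}" using finY by simp
  next
    fix i e assume i: "i \<in> {y\<in>Y. Gy y \<inter> S = {}}" and e: "e \<in> {e\<in>M i. e \<subseteq> S}"
    obtain u v where uv: "e = {u,v}" using Mform e by blast
    have m: "{u,v} \<in> M i" and uvS: "u \<in> S" "v \<in> S" using e uv by auto
    have iY: "i \<in> Y" using i by simp
    note mc = Mcol[OF iY m]
    show "\<exists>u v. e = {u,v} \<and> u\<in>S \<and> v\<in>S \<and> c i u = R \<and> \<not> c i v = R"
    proof (cases "c i u = R")
      case True then show ?thesis using uv uvS mc by auto
    next
      case False
      have cv: "c i v = R" using mc False by (cases "c i u"; cases "c i v") auto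
      have "e = {v,u}" using uv by (simp add: insert_commute)
      then show ?thesis using uvS cv False by blast
    qed
  next
    fix i u v w assume i: "i \<in> {y\<in>Y. Gy y \<inter> S = {}}" and 1: "{u,v} \<in> {e\<in>M i. e \<subseteq> S}"
      and 2: "{u,w} \<in> {e\<in>M i. e \<subseteq> S}"
    have iY: "i \<in> Y" using i by simp
    have a: "u \<in> X \<and> v \<in> X \<and> c u v = G \<and> rainbow c i u v" using Mmem[OF iY] 1 by blast
    have b: "u \<in> X \<and> w \<in> X \<and> c u w = G \<and> rainbow c i u w" using Mmem[OF iY] 2 by blast
    show "v = w" using AG[of i u v w] a b iY XV YV by blast
  next
    fix i j e assume i: "i \<in> {y\<in>Y. Gy y \<inter> S = {}}" and j: "j \<in> {y\<in>Y. Gy y \<inter> S = {}}" and ij: "i \<noteq> j"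
      and ei: "e \<in> {e\<in>M i. e \<subseteq> S}" and ej: "e \<in> {e\<in>M j. e \<subseteq> S}"
    have iY: "i \<in> Y" and jY: "j \<in> Y" using i j by auto
    obtain u v where uv: "e = {u,v}" using Mform ei by blast
    have a: "u \<in> X \<and> v \<in> X \<and> c u v = G \<and> rainbow c i u v" using Mmem[OF iY] ei uv by blast
    have b: "rainbow c j u v" using Mmem[OF jY] ej uv by blast
    have "rainbow c u v i" using rb_rot[of i u v] a iY XV YV by blast
    moreover have "rainbow c u v j" using rb_rot[of j u v] a b jY XV YV by blast
    ultimately have "i = j" using AG[of u v i j] a iY jY XV YV by blast
    then show False using ij by simp
  next
    fix i j u v assume i: "i \<in> {y\<in>Y. Gy y \<inter> S = {}}" and j: "j \<in> {y\<in>Y. Gy y \<inter> S = {}}"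
      and m: "{u,v} \<in> {e\<in>M j. e \<subseteq> S}" and cu: "c i u = R" and cv: "\<not> c i v = R"
    have iY: "i \<in> Y" and jY: "j \<in> Y" and GS: "Gy i \<inter> S = {}" using i j by auto
    have a: "u \<in> X \<and> v \<in> X \<and> c u v = G" using Mmem[OF jY] m by blast
    have uvS: "u \<in> S" "v \<in> S" using m by auto
    have "v \<notin> Gy i" using GS uvS by blast
    moreover have "v \<in> V" "v \<noteq> i" using a XV iY assms(3) by auto
    ultimately have "c i v \<noteq> G" unfolding Gy_def green_nbhd_def using a by auto
    then have cvB: "c i v = B" using cv by (cases "c i v") auto
    have "u \<noteq> v" using cu cvB by auto
    moreover have "i \<noteq> u" "i \<noteq> v" using a iY assms(3) by auto
    ultimately have "rainbow c i u v" unfolding rainbow_def using cu cvB a by auto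
    then have "{u,v} \<in> M i" unfolding M_def using a by blast
    then show "{u,v} \<in> {e\<in>M i. e \<subseteq> S}" using uvS by auto
  qed
  define p :: real where "p = 1 / (real d + 1)"
  define q :: real where "q = 1 - p"
  define w where "w = (\<lambda>S. p ^ card S * q ^ card (X - S))"
  have p0: "0 < p" "p \<le> 1" unfolding p_def by auto
  have q0: "0 \<le> q" "q \<le> 1" unfolding q_def using p0 by auto
  have w0: "0 \<le> w S" for S unfolding w_def using p0 q0 by simp
  have WS: "(\<Sum>S\<in>Pow X. if A \<subseteq> S \<and> S \<inter> C = {} then w S else 0) = p ^ card A * q ^ card C"
    if "A \<subseteq> X" "C \<subseteq> X" "A \<inter> C = {}" for A C
    unfolding w_def q_def by (rule weight_sum[OF finX that])
  define F where "F = (\<lambda>S. \<Sum>y\<in>Y. \<Sum>e\<in>M y. if e \<subseteq> S \<and> S \<inter> Gy y = {} then (1::real) else 0)"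
  have logn: "0 \<le> log 2 (real n)" if "n \<noteq> 0" using that by simp
  have FS: "F S \<le> real (card S) / 2 * log 2 (real n)" if S: "S \<subseteq> X" for S
  proof -
    have "F S = (\<Sum>y\<in>Y. if Gy y \<inter> S = {} then real (card {e\<in>M y. e \<subseteq> S}) else 0)"
      unfolding F_def
    proof (rule sum.cong[OF refl])
      fix y assume "y \<in> Y"
      show "(\<Sum>e\<in>M y. if e \<subseteq> S \<and> S \<inter> Gy y = {} then (1::real) else 0) =
            (if Gy y \<inter> S = {} then real (card {e\<in>M y. e \<subseteq> S}) else 0)"
        using finM[of y] by (auto simp: Int_commute sum.If_cases Int_def)
    qed
    also have "\<dots> = real (\<Sum>y\<in>{y\<in>Y. Gy y \<inter> S = {}}. card {e\<in>M y. e \<subseteq> S})"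
      using finY by (simp add: sum.inter_filter[symmetric] if_distrib)
    also have "\<dots> \<le> real (card S)/2 * log 2 (card S)" by (rule perS[OF S])
    also have "\<dots> \<le> real (card S) / 2 * log 2 (real n)"
    proof (cases "card S = 0")
      case False
      have "card S \<le> n" unfolding n_def using S finX card_mono by blast
      then show ?thesis using False by (intro mult_left_mono) auto
    qed simp
    finally show ?thesis .
  qed
  have sum_card: "(\<Sum>S\<in>Pow X. w S * real (card S)) = p * real n"
  proof -
    have "(\<Sum>S\<in>Pow X. w S * real (card S)) = (\<Sum>S\<in>Pow X. \<Sum>x\<in>X. if {x} \<subseteq> S \<and> S \<inter> {} = {} then w S else 0)"
    proof (rule sum.cong[OF refl])
      fix S assume "S \<in> Pow X"
      then have "S \<subseteq> X" by simp
      then have "X \<inter> S = S" by blast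
      then show "w S * real (card S) = (\<Sum>x\<in>X. if {x} \<subseteq> S \<and> S \<inter> {} = {} then w S else 0)"
        using finX by (simp add: sum.If_cases Int_def)
    qed
    also have "\<dots> = (\<Sum>x\<in>X. \<Sum>S\<in>Pow X. if {x} \<subseteq> S \<and> S \<inter> {} = {} then w S else 0)"
      by (rule sum.swap)
    also have "\<dots> = (\<Sum>x\<in>X. p)"
      by (rule sum.cong[OF refl]) (subst WS, auto)
    finally show ?thesis unfolding n_def by simp
  qed
  have sumF: "(\<Sum>S\<in>Pow X. w S * F S) = (\<Sum>y\<in>Y. \<Sum>e\<in>M y. p ^ 2 * q ^ card (Gy y))"
  proof -
    have "(\<Sum>S\<in>Pow X. w S * F S) = (\<Sum>S\<in>Pow X. \<Sum>y\<in>Y. \<Sum>e\<in>M y. if e \<subseteq> S \<and> S \<inter> Gy y = {} then w S else 0)"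
      unfolding F_def by (auto simp: sum_distrib_left intro!: sum.cong)
    also have "\<dots> = (\<Sum>y\<in>Y. \<Sum>S\<in>Pow X. \<Sum>e\<in>M y. if e \<subseteq> S \<and> S \<inter> Gy y = {} then w S else 0)"
      by (rule sum.swap)
    also have "\<dots> = (\<Sum>y\<in>Y. \<Sum>e\<in>M y. \<Sum>S\<in>Pow X. if e \<subseteq> S \<and> S \<inter> Gy y = {} then w S else 0)"
      by (rule sum.cong[OF refl]) (rule sum.swap)
    also have "\<dots> = (\<Sum>y\<in>Y. \<Sum>e\<in>M y. p ^ 2 * q ^ card (Gy y))"
    proof (rule sum.cong[OF refl], rule sum.cong[OF refl])
      fix y e assume y: "y \<in> Y" and e: "e \<in> M y"
      show "(\<Sum>S\<in>Pow X. if e \<subseteq> S \<and> S \<inter> Gy y = {} then w S else 0) = p ^ 2 * q ^ card (Gy y)"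
        using WS[OF eGy(2)[OF y e] GyX eGy(1)[OF y e]] eGy(3)[OF y e] by simp
    qed
    finally show ?thesis .
  qed
  have lower: "p ^ 2 * q ^ d * real (tau_rb G c X Y) \<le> (\<Sum>y\<in>Y. \<Sum>e\<in>M y. p ^ 2 * q ^ card (Gy y))"
  proof -
    have "p ^ 2 * q ^ d * real (tau_rb G c X Y) = (\<Sum>y\<in>Y. \<Sum>e\<in>M y. p ^ 2 * q ^ d)"
      unfolding tau_eq by (simp add: sum_distrib_left mult_ac)
    also have "\<dots> \<le> (\<Sum>y\<in>Y. \<Sum>e\<in>M y. p ^ 2 * q ^ card (Gy y))"
    proof (intro sum_mono mult_left_mono)
      fix y assume "y \<in> Y"
      then show "q ^ d \<le> q ^ card (Gy y)" using Gyd q0 by (intro power_decreasing) auto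
    qed simp
    finally show ?thesis .
  qed
  have upper: "(\<Sum>S\<in>Pow X. w S * F S) \<le> log 2 (real n) / 2 * (p * real n)"
  proof -
    have "(\<Sum>S\<in>Pow X. w S * F S) \<le> (\<Sum>S\<in>Pow X. w S * (real (card S) / 2 * log 2 (real n)))"
      by (intro sum_mono mult_left_mono FS w0) auto
    also have "\<dots> = log 2 (real n) / 2 * (\<Sum>S\<in>Pow X. w S * real (card S))"
      by (simp add: sum_distrib_left mult_ac)
    finally show ?thesis using sum_card by simp
  qed
  have main: "p * q ^ d * real (tau_rb G c X Y) \<le> real n * log 2 (real n) / 2"
  proof -
    have "p * (p * q ^ d * real (tau_rb G c X Y)) \<le> p * (real n * log 2 (real n) / 2)"
      using lower sumF upper by (simp add: power2_eq_square mult_ac)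
    then show ?thesis using p0 by simp
  qed
  have eq1: "exp 1 * q ^ d \<ge> 1"
  proof (cases "d = 0")
    case True then show ?thesis by simp
  next
    case False
    have "(1 + 1 / real d) powr real d < exp 1" using exp_1_gt_powr[of "real d"] False by simp
    moreover have "(1 + 1 / real d) powr real d = (1 + 1 / real d) ^ d"
      by (rule powr_realpow) (simp add: add_pos_nonneg)
    ultimately have lt: "(1 + 1 / real d) ^ d < exp 1" by simp
    have "q = real d / (real d + 1)" unfolding q_def p_def by (simp add: field_simps)
    also have "\<dots> = 1 / (1 + 1 / real d)" using False by (simp add: field_simps)
    finally have "q ^ d = 1 / (1 + 1 / real d) ^ d" by (simp add: power_one_over)
    moreover have pos: "0 < (1 + 1 / real d) ^ d" by (simp add: add_pos_nonneg)
    ultimately show ?thesis using lt by (simp add: le_divide_eq)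
  qed
  have nl: "0 \<le> real n * log 2 (real n)" by (cases "n = 0") auto
  have t0: "0 \<le> real (tau_rb G c X Y)" by simp
  have "real (tau_rb G c X Y) = (real d + 1) * p * real (tau_rb G c X Y)" unfolding p_def by simp
  also have "\<dots> \<le> (real d + 1) * p * real (tau_rb G c X Y) * (exp 1 * q ^ d)"
  proof -
    have "0 \<le> (real d + 1) * p * real (tau_rb G c X Y)" using p0 by simp
    from mult_left_mono[OF eq1 this] show ?thesis by simp
  qed
  also have "\<dots> = exp 1 * (real d + 1) * (p * q ^ d * real (tau_rb G c X Y))" by (simp add: mult_ac)
  also have "\<dots> \<le> exp 1 * (real d + 1) * (real n * log 2 (real n) / 2)"
    using main by (intro mult_left_mono) auto
  finally show ?thesis unfolding n_def by (simp add: mult_ac)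
qed
end
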